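(* Let $f:[0,\infty)\to\mathbb{R}$ be differentiable, let $0<a<b<\infty$, and suppose $f'$ is Lebesgue integrable on $[a,b]$. Let $(\alpha,m)\in(0,1]^2$ and $q>1$, and suppose $|f'|^q$ is $(\alpha,m)$-GA-convex on $[0,\max\{a^{1/m},b\}]$. Then \[ \biggl|\frac{b^2f(b)-a^2f(a)}{2}-\int_a^b xf(x)\,dx\biggr|\le\frac{\ln b-\ln a}{2}\Bigl\{m\bigl[L(a^{3q},b^{3q})-G(\alpha,3q)\bigr]\bigl|f'(a^{1/m})\bigr|^q+G(\alpha,3q)|f'(b)|^q\Bigr\}^{1/q}. \]
   Context: For $c>0$, $h:[0,c]\to\mathbb{R}$ and $(\alpha,m)\in(0,1]^2$, $h$ is called $(\alpha,m)$-GA-convex on $[0,c]$ if $h\bigl(x^\lambda y^{m(1-\lambda)}\bigr)\le\lambda^\alpha h(x)+m(1-\lambda^\alpha)h(y)$ for all $x,y\in[0,c]$ and all $\lambda\in[0,1]$ (with the convention $0^0=1$). For fixed $0<a<b$ and $\ell\ge0$, $\alpha>0$, set $G(\alpha,\ell)=\int_0^1 t^\alpha a^{\ell(1-t)}b^{\ell t}\,dt$. For $x,y>0$, $x\neq y$, the logarithmic mean is $L(x,y)=\frac{y-x}{\ln y-\ln x}$. *)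

theory Defs
  imports "HOL-Analysis.Analysis"
begin

text \<open>Real power with the convention 0 to the power 0 equals 1 (Isabelle's powr gives 0 there).\<close>
definition rpow :: "real \<Rightarrow> real \<Rightarrow> real" where
  "rpow x t = (if t = 0 then 1 else x powr t)"

definition GA_convex :: "real \<Rightarrow> real \<Rightarrow> real \<Rightarrow> (real \<Rightarrow> real) \<Rightarrow> bool" where
  "GA_convex \<alpha> m c h \<longleftrightarrow>
     (\<forall>x\<in>{0..c}. \<forall>y\<in>{0..c}. \<forall>t\<in>{0..1}.
        h (rpow x t * rpow y (m * (1 - t))) \<le> rpow t \<alpha> * h x + m * (1 - rpow t \<alpha>) * h y)"

definition GG :: "real \<Rightarrow> real \<Rightarrow> real \<Rightarrow> real \<Rightarrow> real" where
  "GG a b \<alpha> l = integral {0..1} (\<lambda>t. t powr \<alpha> * a powr (l * (1 - t)) * b powr (l * t))"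

definition logmean :: "real \<Rightarrow> real \<Rightarrow> real" where
  "logmean x y = (y - x) / (ln y - ln x)"

end

theory Submission
  imports Defs
begin

lemma young_pt:
  fixes y K p :: real
  assumes "0 \<le> y" "0 < K" "0 < p" "p \<le> 1"
  shows "y powr p \<le> K powr p * (p * y / K + (1 - p))"
proof (cases "y = 0")
  case True then show ?thesis using assms by simp
next
  case False
  then have y: "y > 0" using assms by simp
  have "(y/K) powr p * 1 powr (1-p) \<le> p * (y/K) + (1-p) * 1"
    by (rule Youngs_inequality_0) (use assms y in auto)
  then have "(y/K) powr p \<le> p * y / K + (1-p)" by simp
  then have "K powr p * (y/K) powr p \<le> K powr p * (p * y / K + (1-p))"
    by (simp add: mult_left_mono)
  moreover have "K powr p * (y/K) powr p = y powr p"
    using assms y by (simp add: powr_divide)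
  ultimately show ?thesis by simp
qed

lemma jensen_int:
  fixes h :: "real \<Rightarrow> real" and p :: real
  assumes cont: "continuous_on {0..1} h" and nn: "\<And>t. t \<in> {0..1} \<Longrightarrow> h t \<ge> 0"
    and p: "0 < p" "p \<le> 1"
  shows "integral {0..1} (\<lambda>t. h t powr p) \<le> (integral {0..1} h) powr p"
proof -
  have ih: "h integrable_on {0..1}" using cont integrable_continuous_real by blast
  have contp: "continuous_on {0..1} (\<lambda>t. h t powr p)"
    by (rule continuous_on_powr') (use cont nn p in auto)
  have ihp: "(\<lambda>t. h t powr p) integrable_on {0..1}" using contp integrable_continuous_real by blast
  have I0: "integral {0..1} h \<ge> 0" using nn ih by (intro integral_nonneg) auto
  have key: "integral {0..1} (\<lambda>t. h t powr p) \<le> K powr p" if K: "K > 0" "integral {0..1} h \<le> K" for K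
  proof -
    have "integral {0..1} (\<lambda>t. h t powr p) \<le> integral {0..1} (\<lambda>t. K powr p * (p * h t / K + (1 - p)))"
    proof (rule integral_le)
      show "(\<lambda>t. K powr p * (p * h t / K + (1 - p))) integrable_on {0..1}"
        using K by (auto intro!: integrable_continuous_real continuous_intros cont)
      fix t :: real assume "t \<in> {0..1}"
      then show "h t powr p \<le> K powr p * (p * h t / K + (1 - p))"
        using young_pt[OF nn[of t] K(1) p] by simp
    qed (fact ihp)
    also have "\<dots> = K powr p * (p * integral {0..1} h / K + (1 - p))"
    proof -
      have "integral {0..1} (\<lambda>t. p * h t / K + (1 - p)) = integral {0..1} (\<lambda>t. p * h t / K) + integral {0..1} (\<lambda>t::real. (1 - p))"
      proof (rule Henstock_Kurzweil_Integration.integral_add[of "\<lambda>t. p * h t / K" _ "\<lambda>t. 1 - p"])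
        show "(\<lambda>t. p * h t / K) integrable_on {0..1}"
          using integrable_on_cmult_right[OF ih, of "p/K"] by (simp add: field_simps)
      qed auto
      also have "\<dots> = p * integral {0..1} h / K + (1 - p)"
        by (simp add: integral_divide)
      finally show ?thesis by simp
    qed
    also have "\<dots> \<le> K powr p * (p * K / K + (1 - p))"
      using K p by (intro mult_left_mono add_right_mono) (auto simp: divide_right_mono pos_divide_le_eq mult_left_mono)
    also have "\<dots> = K powr p" using K by simp
    finally show ?thesis .
  qed
  show ?thesis
  proof (cases "integral {0..1} h = 0")
    case False
    then show ?thesis using key[of "integral {0..1} h"] I0 by simp
  next
    case True
    have "integral {0..1} (\<lambda>t. h t powr p) \<le> e" if "e > 0" for e
      using key[of "e powr (1/p)"] that True p by (simp add: powr_powr)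
    then have "integral {0..1} (\<lambda>t. h t powr p) \<le> 0"
      by (meson dense not_le)
    then show ?thesis using True by simp
  qed
qed


lemma exp_int01:
  fixes u v :: real assumes "v \<noteq> 0"
  shows "((\<lambda>t. exp (u + t * v)) has_integral (exp (u + v) - exp u) / v) {0..1}"
proof -
  have "((\<lambda>t. exp (u + t * v)) has_integral ((\<lambda>t. exp (u + t * v) / v) 1 - (\<lambda>t. exp (u + t * v) / v) 0)) {0..1}"
  proof (rule fundamental_theorem_of_calculus)
    fix x :: real assume "x \<in> {0..1}"
    have "((\<lambda>t. exp (u + t * v) / v) has_real_derivative exp (u + x * v) * v / v) (at x within {0..1})"
      by (auto intro!: derivative_eq_intros)
    then show "((\<lambda>t. exp (u + t * v) / v) has_vector_derivative exp (u + x * v)) (at x within {0..1})"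
      using assms by (simp add: has_real_derivative_iff_has_vector_derivative)
  qed simp
  then show ?thesis by (simp add: diff_divide_distrib)
qed

theorem theorem3p3:
  fixes f f' :: "real \<Rightarrow> real" and a b \<alpha> m q :: real
  assumes deriv: "\<And>x. x \<ge> 0 \<Longrightarrow> (f has_real_derivative f' x) (at x within {0..})"
    and ab: "0 < a" "a < b"
    and integ: "set_integrable lborel {a..b} f'"
    and alpha: "0 < \<alpha>" "\<alpha> \<le> 1"
    and m: "0 < m" "m \<le> 1"
    and q: "q > 1"
    and conv: "GA_convex \<alpha> m (max (a powr (1/m)) b) (\<lambda>x. \<bar>f' x\<bar> powr q)"
  shows "\<bar>(b\<^sup>2 * f b - a\<^sup>2 * f a) / 2 - integral {a..b} (\<lambda>x. x * f x)\<bar>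
    \<le> (ln b - ln a) / 2 *
       (m * (logmean (a powr (3*q)) (b powr (3*q)) - GG a b \<alpha> (3*q)) * \<bar>f' (a powr (1/m))\<bar> powr q
        + GG a b \<alpha> (3*q) * \<bar>f' b\<bar> powr q) powr (1/q)"
proof -
  define la lb d where "la = ln a" and "lb = ln b" and "d = ln b - ln a"
  have d: "d > 0" using ab by (simp add: d_def)
  define \<phi> where "\<phi> t = exp (la + t * d)" for t
  have phipos: "\<phi> t > 0" for t by (simp add: \<phi>_def)
  have phi0: "\<phi> 0 = a" and phi1: "\<phi> 1 = b" using ab by (auto simp: \<phi>_def la_def d_def)
  have phiab: "\<phi> t \<in> {a..b}" if "t \<in> {0..1}" for t
  proof -
    have "la + t * d \<ge> la" "la + t * d \<le> la + d" using that d by (auto simp: mult_left_le)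
    then have "\<phi> t \<ge> \<phi> 0" "\<phi> t \<le> \<phi> 1" by (auto simp: \<phi>_def)
    then show ?thesis using phi0 phi1 by simp
  qed
  have phid: "(\<phi> has_real_derivative \<phi> t * d) (at t within S)" for t S
    unfolding \<phi>_def by (auto intro!: derivative_eq_intros)
  have phipow: "\<phi> t powr (3*q) = a powr (3*q*(1-t)) * b powr (3*q*t)" for t
    using ab by (simp add: \<phi>_def powr_def la_def d_def exp_add[symmetric] algebra_simps)
  have phipow': "\<phi> t = b powr t * a powr (1-t)" for t
    using ab by (simp add: \<phi>_def powr_def la_def d_def exp_add[symmetric] algebra_simps)
  have fcont: "continuous_on {a..b} f"
  proof -
    have "continuous (at x within {a..b}) f" if "x \<in> {a..b}" for x
    proof -
      have "continuous (at x within {0..}) f" using deriv[of x] that ab DERIV_continuous by auto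
      then show ?thesis by (rule continuous_within_subset) (use ab in auto)
    qed
    then show ?thesis by (simp add: continuous_on_eq_continuous_within)
  qed
  define g where "g x = x * f x" for x
  have gcont: "continuous_on {a..b} g" unfolding g_def by (intro continuous_intros fcont)
  define H where "H t = \<phi> t * \<phi> t * f (\<phi> t) / 2 - integral {a..\<phi> t} g" for t
  define c where "c = d / 2"
  define g2 where "g2 t = \<phi> t ^ 3 * f' (\<phi> t)" for t
  have Hd: "(H has_real_derivative c * g2 t) (at t within {0..1})" if t: "t \<in> {0..1}" for t
  proof -
    have sub: "\<phi> ` {0..1} \<subseteq> {a..b}" using phiab by auto
    have sub0: "\<phi> ` {0..1} \<subseteq> {0..}" using phiab ab by fastforce
    have "(f has_real_derivative f' (\<phi> t)) (at (\<phi> t) within \<phi> ` {0..1})"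
      by (rule DERIV_subset[OF deriv sub0]) (use phipos[of t] in simp)
    from DERIV_image_chain[OF this phid]
    have df: "((\<lambda>t. f (\<phi> t)) has_real_derivative f' (\<phi> t) * (\<phi> t * d)) (at t within {0..1})"
      by (simp add: o_def)
    have "((\<lambda>u. integral {a..u} g) has_vector_derivative g (\<phi> t)) (at (\<phi> t) within {a..b})"
      by (rule integral_has_vector_derivative[OF gcont phiab[OF t]])
    then have "((\<lambda>u. integral {a..u} g) has_real_derivative g (\<phi> t)) (at (\<phi> t) within \<phi> ` {0..1})"
      by (intro DERIV_subset[OF _ sub]) (simp add: has_real_derivative_iff_has_vector_derivative)
    from DERIV_image_chain[OF this phid]
    have dB: "((\<lambda>t. integral {a..\<phi> t} g) has_real_derivative g (\<phi> t) * (\<phi> t * d)) (at t within {0..1})"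
      by (simp add: o_def)
    note X = DERIV_diff[OF DERIV_cdivide[OF DERIV_mult[OF DERIV_mult[OF phid phid] df], of 2] dB]
    show ?thesis unfolding H_def
      by (rule DERIV_cong[OF X]) (simp add: c_def g2_def g_def power3_eq_cube algebra_simps)
  qed
  have Hint: "((\<lambda>t. c * g2 t) has_integral (H 1 - H 0)) {0..1}"
    by (rule fundamental_theorem_of_calculus) (use Hd in \<open>auto simp: has_real_derivative_iff_has_vector_derivative\<close>)
  have H10: "H 1 - H 0 = (b\<^sup>2 * f b - a\<^sup>2 * f a) / 2 - integral {a..b} (\<lambda>x. x * f x)"
  proof -
    have "g = (\<lambda>x. x * f x)" by (simp add: g_def fun_eq_iff)
    then show ?thesis by (simp add: H_def phi0 phi1 power2_eq_square diff_divide_distrib)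
  qed
  have g2int: "g2 integrable_on {0..1}"
    using Hint d c_def integrable_on_cmult_iff[of c g2 "{0..1}"] by (auto simp: has_integral_integrable)
  have LHS: "\<bar>(b\<^sup>2 * f b - a\<^sup>2 * f a) / 2 - integral {a..b} (\<lambda>x. x * f x)\<bar> = c * \<bar>integral {0..1} g2\<bar>"
  proof -
    have "integral {0..1} (\<lambda>t. c * g2 t) = H 1 - H 0" using Hint by (rule integral_unique)
    then have "H 1 - H 0 = c * integral {0..1} g2" by simp
    then have "(b\<^sup>2 * f b - a\<^sup>2 * f a) / 2 - integral {a..b} (\<lambda>x. x * f x) = c * integral {0..1} g2"
      using H10 by simp
    then show ?thesis using d by (simp only: abs_mult c_def)
  qed
  define A where "A = \<bar>f' (a powr (1/m))\<bar> powr q"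
  define B where "B = \<bar>f' b\<bar> powr q"
  define hh where "hh t = \<phi> t powr (3*q) * (t powr \<alpha> * B + m * (1 - t powr \<alpha>) * A)" for t
  have A0: "A \<ge> 0" and B0: "B \<ge> 0" by (auto simp: A_def B_def)
  have convt: "\<bar>f' (\<phi> t)\<bar> powr q \<le> t powr \<alpha> * B + m * (1 - t powr \<alpha>) * A" if t: "t \<in> {0..1}" for t
  proof -
    have "b \<in> {0..max (a powr (1/m)) b}" "a powr (1/m) \<in> {0..max (a powr (1/m)) b}" using ab by auto
    from conv[unfolded GA_convex_def, rule_format, OF this t]
    have *: "\<bar>f' (rpow b t * rpow (a powr (1/m)) (m * (1 - t)))\<bar> powr q
        \<le> rpow t \<alpha> * B + m * (1 - rpow t \<alpha>) * A" by (simp add: A_def B_def)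
    have r1: "rpow b t = b powr t" using ab by (simp add: rpow_def)
    have r2: "rpow (a powr (1/m)) (m * (1 - t)) = a powr (1 - t)" using ab m by (simp add: rpow_def powr_powr)
    have r3: "rpow t \<alpha> = t powr \<alpha>" using alpha by (simp add: rpow_def)
    show ?thesis using * unfolding r1 r2 r3 phipow' .
  qed
  have g2le: "\<bar>g2 t\<bar> \<le> hh t powr (1/q)" and hh0: "hh t \<ge> 0" if t: "t \<in> {0..1}" for t
  proof -
    have e: "\<bar>g2 t\<bar> = (\<phi> t powr (3*q) * \<bar>f' (\<phi> t)\<bar> powr q) powr (1/q)"
    proof -
      have "(\<phi> t powr (3*q) * \<bar>f' (\<phi> t)\<bar> powr q) powr (1/q) = (\<phi> t powr (3*q)) powr (1/q) * (\<bar>f' (\<phi> t)\<bar> powr q) powr (1/q)"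
        by (rule powr_mult; simp)
      also have "\<dots> = \<phi> t powr 3 * \<bar>f' (\<phi> t)\<bar>" using q by (simp add: powr_powr)
      also have "\<phi> t powr 3 = \<phi> t ^ 3" using phipos[of t] powr_realpow[of "\<phi> t" 3] by simp
      finally show ?thesis using phipos[of t] by (simp add: g2_def abs_mult)
    qed
    have le: "\<phi> t powr (3*q) * \<bar>f' (\<phi> t)\<bar> powr q \<le> hh t"
      unfolding hh_def by (rule mult_left_mono[OF convt[OF t]]) simp
    show "\<bar>g2 t\<bar> \<le> hh t powr (1/q)" unfolding e by (rule powr_mono2) (use q le in auto)
    show "hh t \<ge> 0" by (rule order_trans[OF _ le]) simp
  qed
  define k0 where "k0 t = a powr (3*q*(1-t)) * b powr (3*q*t)" for t
  define k1 where "k1 t = t powr \<alpha> * a powr (3*q*(1-t)) * b powr (3*q*t)" for t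
  have k0c: "continuous_on {0..1} k0" unfolding k0_def using ab by (intro continuous_intros) auto
  have tpc: "continuous_on {0..1} (\<lambda>t::real. t powr \<alpha>)"
    by (rule continuous_on_powr') (use alpha in \<open>auto intro: continuous_intros\<close>)
  have k1c: "continuous_on {0..1} k1" unfolding k1_def using ab by (intro continuous_intros tpc) auto
  have k0i: "k0 integrable_on {0..1}" and k1i: "k1 integrable_on {0..1}"
    using k0c k1c integrable_continuous_real by blast+
  have hh_eq: "hh = (\<lambda>t. B * k1 t + (m * A) * k0 t - (m * A) * k1 t)"
    unfolding fun_eq_iff hh_def phipow k0_def k1_def by (simp add: algebra_simps)
  have G: "integral {0..1} k1 = GG a b \<alpha> (3*q)" by (simp add: GG_def k1_def[abs_def])
  have L: "integral {0..1} k0 = logmean (a powr (3*q)) (b powr (3*q))"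
  proof -
    have k0e: "k0 t = exp (3*q*ln a + t * (3*q*(ln b - ln a)))" for t
      using ab by (simp add: k0_def powr_def exp_add[symmetric] algebra_simps)
    have "(k0 has_integral (exp (3*q*ln a + 3*q*(ln b - ln a)) - exp (3*q*ln a)) / (3*q*(ln b - ln a))) {0..1}"
      unfolding k0e using exp_int01[of "3*q*(ln b - ln a)" "3*q*ln a"] d q by (simp add: d_def)
    moreover have "(exp (3*q*ln a + 3*q*(ln b - ln a)) - exp (3*q*ln a)) / (3*q*(ln b - ln a))
        = logmean (a powr (3*q)) (b powr (3*q))"
      using ab by (simp add: logmean_def powr_def algebra_simps)
    ultimately show ?thesis by (simp add: integral_unique)
  qed
  have hhint: "integral {0..1} hh = m * (logmean (a powr (3*q)) (b powr (3*q)) - GG a b \<alpha> (3*q)) * A + GG a b \<alpha> (3*q) * B"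
  proof -
    have "integral {0..1} hh = B * integral {0..1} k1 + (m * A) * integral {0..1} k0 - (m * A) * integral {0..1} k1"
    proof -
      have i1: "(\<lambda>t. B * k1 t) integrable_on {0..1}" using k1i by (rule integrable_on_mult_right)
      have i2: "(\<lambda>t. (m * A) * k0 t) integrable_on {0..1}" using k0i by (rule integrable_on_mult_right)
      have i3: "(\<lambda>t. (m * A) * k1 t) integrable_on {0..1}" using k1i by (rule integrable_on_mult_right)
      have i12: "(\<lambda>t. B * k1 t + (m * A) * k0 t) integrable_on {0..1}" using i1 i2 by (rule integrable_add)
      show ?thesis unfolding hh_eq
        using Henstock_Kurzweil_Integration.integral_diff[OF i12 i3]
          Henstock_Kurzweil_Integration.integral_add[OF i1 i2]
        by simp
    qed
    then show ?thesis unfolding G L by (simp add: algebra_simps)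
  qed
  have hhc: "continuous_on {0..1} hh" unfolding hh_eq by (intro continuous_intros k0c k1c)
  have "\<bar>integral {0..1} g2\<bar> \<le> integral {0..1} (\<lambda>t. hh t powr (1/q))"
  proof -
    have "(\<lambda>t. hh t powr (1/q)) integrable_on {0..1}"
      by (intro integrable_continuous_real continuous_on_powr' hhc continuous_intros) (use hh0 q in auto)
    then show ?thesis using integral_norm_bound_integral[OF g2int, of "\<lambda>t. hh t powr (1/q)"] g2le by simp
  qed
  also have "\<dots> \<le> (integral {0..1} hh) powr (1/q)"
    by (rule jensen_int[OF hhc hh0]) (use q in auto)
  finally have "c * \<bar>integral {0..1} g2\<bar> \<le> c * (integral {0..1} hh) powr (1/q)"
    using d by (simp add: c_def)
  then show ?thesis unfolding LHS hhint c_def A_def B_def d_def .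
qed

end
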